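(* Let $v,j,n$ be positive integers, $\mathcal{V}=\{1,\dots,v\}$, $\mathcal{X}=2^{\mathcal{V}}$, $\mathcal{Y}=\binom{\mathcal{V}}{j}\times\{0,1\}^j$, $p$ a probability distribution on $\mathcal{X}$ and $u:\mathcal{X}\times2^{\mathcal{X}}\to\mathbb{R}^+$ semantic weights. For reports $X^n=(X(1),\dots,X(n))$ i.i.d. with law $p$, the minimum, over all summarizers $s\in\mathcal{P}(\mathcal{Y}|\mathcal{X}^n)$ of length $j$ (with $Y\sim s_{X^n}(y)$), of the semantic loss $\ell(X(1);Y\mid u)$ equals $$\sum_{x\in\mathcal{X}}p(x)\min_{y\in\mathcal{Y}}\sum_{\mathcal{W}\subseteq\mathcal{X}}u(x,\mathcal{W})\bigl(1-i_y(\mathcal{W})\bigr),$$ where $i_y(\mathcal{W})=\sum_{x\in\mathcal{W}}i_y(x)$.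
   Context: Reports are elements $x\in\mathcal{X}=2^{\mathcal{V}}$, equivalently binary vectors $(x_1,\dots,x_v)$. A summary is $y=(\hat y,\tilde y)$ with $\hat y\subseteq\mathcal{V}$, $|\hat y|=j$, and $\tilde y\in\{0,1\}^j$; write $y\subset x$ if $\tilde y$ equals the restriction of $x$ to the coordinates in $\hat y$. Let $\mathcal{X}(y)=\{x\in\mathcal{X}: y\subset x\}$ and $p(A)=\sum_{a\in A}p(a)$. The summary interpretation is $i_y(x)=1_{\mathcal{X}(y)}(x)\,p(x)/p(\mathcal{X}(y))$. Semantic weights are any $u:\mathcal{X}\times2^{\mathcal{X}}\to\mathbb{R}^+$ with $u(x,\mathcal{W})=0$ whenever $x\notin\mathcal{W}$. A summarizer of length $j$ is a conditional distribution $s\in\mathcal{P}(\mathcal{Y}|\mathcal{X}^n)$, producing $Y\sim s_{X^n}(y)$. For $\mathcal{W}\subseteq\mathcal{X}$, $\mathcal{P}(\mathcal{W}|\mathcal{X})$ is the set of conditional distributions on $\mathcal{X}$ given an element of $\mathcal{X}$ supported on $\mathcal{W}$. The semantic loss is $$\ell(X;Y\mid u)=\mathbb{E}\Bigl[\sum_{\mathcal{W}\subseteq\mathcal{X}}\inf_{q\in\mathcal{P}(\mathcal{W}|\mathcal{X})} u(X,\mathcal{W})\sum_{x\in\mathcal{X}}\tfrac12\bigl|q_X(x)-i_Y(x)\bigr|\Bigr].$$ *)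

theory Defs
  imports Complex_Main "HOL-Library.FuncSet"
begin

definition reports :: "nat \<Rightarrow> nat set set" where
  "reports v = Pow {1..v}"

(* Summaries y = (yhat, ytilde): yhat a j-subset of V, ytilde \<in> {0,1}^yhat,
   encoded as a function yhat \<Rightarrow> bool (extensional, undefined off yhat). *)
definition summaries :: "nat \<Rightarrow> nat \<Rightarrow> (nat set \<times> (nat \<Rightarrow> bool)) set" where
  "summaries v j = {(S, b). S \<subseteq> {1..v} \<and> card S = j \<and> b \<in> extensional S}"

definition sub_of :: "nat set \<times> (nat \<Rightarrow> bool) \<Rightarrow> nat set \<Rightarrow> bool" where
  "sub_of y x = (\<forall>k\<in>fst y. snd y k = (k \<in> x))"

definition cyl :: "nat \<Rightarrow> nat set \<times> (nat \<Rightarrow> bool) \<Rightarrow> nat set set" where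
  "cyl v y = {x \<in> reports v. sub_of y x}"

definition interp :: "nat \<Rightarrow> (nat set \<Rightarrow> real) \<Rightarrow> nat set \<times> (nat \<Rightarrow> bool) \<Rightarrow> nat set \<Rightarrow> real" where
  "interp v p y x = (if x \<in> cyl v y then p x / (\<Sum>a\<in>cyl v y. p a) else 0)"

definition interp_set :: "nat \<Rightarrow> (nat set \<Rightarrow> real) \<Rightarrow> nat set \<times> (nat \<Rightarrow> bool) \<Rightarrow> nat set set \<Rightarrow> real" where
  "interp_set v p y W = (\<Sum>x\<in>W. interp v p y x)"

definition is_distr :: "'a set \<Rightarrow> ('a \<Rightarrow> real) \<Rightarrow> bool" where
  "is_distr A f \<longleftrightarrow> (\<forall>a\<in>A. f a \<ge> 0) \<and> (\<Sum>a\<in>A. f a) = 1"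

definition sem_weights :: "nat \<Rightarrow> (nat set \<Rightarrow> nat set set \<Rightarrow> real) \<Rightarrow> bool" where
  "sem_weights v u \<longleftrightarrow> (\<forall>x\<in>reports v. \<forall>W\<in>Pow (reports v).
       u x W \<ge> 0 \<and> (x \<notin> W \<longrightarrow> u x W = 0))"

definition cond_distrs :: "nat \<Rightarrow> nat set set \<Rightarrow> (nat set \<Rightarrow> nat set \<Rightarrow> real) set" where
  "cond_distrs v W = {q. \<forall>x0\<in>reports v. is_distr (reports v) (q x0) \<and>
                          (\<forall>x\<in>reports v - W. q x0 x = 0)}"

(* Inner term for realisation X = x and Y = y.  The term for W = {} is omitted:
   there u(x,{}) = 0 and P({}|X) is empty (0 * inf {} taken as 0). *)
definition sem_term :: "nat \<Rightarrow> (nat set \<Rightarrow> real) \<Rightarrow> (nat set \<Rightarrow> nat set set \<Rightarrow> real)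
    \<Rightarrow> nat set \<Rightarrow> nat set \<times> (nat \<Rightarrow> bool) \<Rightarrow> real" where
  "sem_term v p u x y = (\<Sum>W\<in>Pow (reports v) - {{}}.
      Inf {u x W * (\<Sum>x'\<in>reports v. \<bar>q x x' - interp v p y x'\<bar> / 2) | q. q \<in> cond_distrs v W})"

(* X^n as lists of length n; report X(1) is xs ! 0 *)
definition report_seqs :: "nat \<Rightarrow> nat \<Rightarrow> nat set list set" where
  "report_seqs v n = {xs. length xs = n \<and> set xs \<subseteq> reports v}"

definition summarizers :: "nat \<Rightarrow> nat \<Rightarrow> nat \<Rightarrow> (nat set list \<Rightarrow> nat set \<times> (nat \<Rightarrow> bool) \<Rightarrow> real) set" where
  "summarizers v j n = {s. \<forall>xs\<in>report_seqs v n. is_distr (summaries v j) (s xs)}"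

definition sem_loss :: "nat \<Rightarrow> nat \<Rightarrow> nat \<Rightarrow> (nat set \<Rightarrow> real) \<Rightarrow> (nat set \<Rightarrow> nat set set \<Rightarrow> real)
    \<Rightarrow> (nat set list \<Rightarrow> nat set \<times> (nat \<Rightarrow> bool) \<Rightarrow> real) \<Rightarrow> real" where
  "sem_loss v j n p u s = (\<Sum>xs\<in>report_seqs v n. (\<Prod>i<n. p (xs ! i)) *
       (\<Sum>y\<in>summaries v j. s xs y * sem_term v p u (xs ! 0) y))"

end

theory Submission
  imports Defs
begin

lemma finite_reports: "finite (reports v)"
  unfolding reports_def by simp

lemma finite_report_seqs: "finite (report_seqs v n)"
proof -
  have "report_seqs v n = {xs. set xs \<subseteq> reports v \<and> length xs = n}"
    unfolding report_seqs_def by auto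
  then show ?thesis using finite_lists_length_eq[OF finite_reports] by simp
qed

lemma report_seqs_Suc:
  "report_seqs v (Suc m) = (\<lambda>(x,ys). x # ys) ` (reports v \<times> report_seqs v m)"
proof (rule set_eqI)
  fix xs
  show "xs \<in> report_seqs v (Suc m) \<longleftrightarrow> xs \<in> (\<lambda>(x,ys). x # ys) ` (reports v \<times> report_seqs v m)"
  proof
    assume "xs \<in> report_seqs v (Suc m)"
    then obtain x ys where "xs = x # ys" "x \<in> reports v" "ys \<in> report_seqs v m"
      unfolding report_seqs_def by (cases xs) auto
    then show "xs \<in> (\<lambda>(x,ys). x # ys) ` (reports v \<times> report_seqs v m)" by force
  qed (auto simp: report_seqs_def)
qed

lemma sum_seqs_g:
  fixes p :: "nat set \<Rightarrow> real"
  shows "(\<Sum>xs\<in>report_seqs v (Suc m). (\<Prod>i<Suc m. p (xs ! i)) * g (xs ! 0))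
    = (\<Sum>x\<in>reports v. p x * g x) * (\<Sum>ys\<in>report_seqs v m. (\<Prod>i<m. p (ys ! i)))"
proof -
  have inj: "inj_on (\<lambda>(x,ys). x # ys) (reports v \<times> report_seqs v m)"
    by (auto simp: inj_on_def)
  have "(\<Sum>xs\<in>report_seqs v (Suc m). (\<Prod>i<Suc m. p (xs ! i)) * g (xs ! 0))
      = (\<Sum>(x,ys)\<in>reports v \<times> report_seqs v m. (\<Prod>i<Suc m. p ((x#ys) ! i)) * g x)"
    unfolding report_seqs_Suc by (subst sum.reindex[OF inj]) (simp add: case_prod_beta)
  also have "\<dots> = (\<Sum>(x,ys)\<in>reports v \<times> report_seqs v m. (p x * g x) * (\<Prod>i<m. p (ys ! i)))"
  proof (rule sum.cong[OF refl])
    fix z assume "z \<in> reports v \<times> report_seqs v m"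
    obtain x ys where z: "z = (x, ys)" by (cases z)
    have "(\<Prod>i<Suc m. p ((x#ys) ! i)) = p x * (\<Prod>i<m. p (ys ! i))"
      by (simp only: prod.lessThan_Suc_shift) simp
    then show "(case z of (x, ys) \<Rightarrow> (\<Prod>i<Suc m. p ((x#ys) ! i)) * g x) =
      (case z of (x, ys) \<Rightarrow> (p x * g x) * (\<Prod>i<m. p (ys ! i)))" unfolding z by simp
  qed
  also have "\<dots> = (\<Sum>x\<in>reports v. \<Sum>ys\<in>report_seqs v m. (p x * g x) * (\<Prod>i<m. p (ys ! i)))"
    by (rule sum.cartesian_product[symmetric])
  also have "\<dots> = (\<Sum>x\<in>reports v. p x * g x) * (\<Sum>ys\<in>report_seqs v m. (\<Prod>i<m. p (ys ! i)))"
    by (simp only: sum_product)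
  finally show ?thesis .
qed

lemma sum_seqs_1:
  fixes p :: "nat set \<Rightarrow> real"
  assumes "(\<Sum>x\<in>reports v. p x) = 1"
  shows "(\<Sum>xs\<in>report_seqs v m. (\<Prod>i<m. p (xs ! i))) = 1"
proof (induction m)
  case 0
  have "report_seqs v 0 = {[]}" by (auto simp: report_seqs_def)
  then show ?case by simp
next
  case (Suc m)
  show ?case using sum_seqs_g[where v=v and m=m and p=p and g="\<lambda>_. 1"] Suc assms by simp
qed

lemma sum_seqs_first:
  fixes p :: "nat set \<Rightarrow> real"
  assumes "(\<Sum>x\<in>reports v. p x) = 1" "0 < n"
  shows "(\<Sum>xs\<in>report_seqs v n. (\<Prod>i<n. p (xs ! i)) * g (xs ! 0)) = (\<Sum>x\<in>reports v. p x * g x)"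
proof -
  obtain m where "n = Suc m" using assms(2) by (cases n) auto
  then show ?thesis using sum_seqs_g[where v=v and m=m and p=p and g=g] sum_seqs_1[OF assms(1)] by simp
qed

lemma finite_summaries: "finite (summaries v j)"
proof -
  have "summaries v j \<subseteq> Sigma (Pow {1..v}) (\<lambda>S. PiE S (\<lambda>_. UNIV))"
    unfolding summaries_def by (auto simp: PiE_def)
  moreover have "finite (Sigma (Pow {1..v}) (\<lambda>S. PiE S (\<lambda>_. UNIV :: bool set)))"
    by (intro finite_SigmaI finite_PiE) (auto dest: finite_subset[OF _ finite_atLeastAtMost])
  ultimately show ?thesis by (rule finite_subset)
qed

lemma summaries_ne: assumes "j \<le> v" shows "summaries v j \<noteq> {}"
proof -
  have "({1..j}, \<lambda>k. if k \<in> {1..j} then True else undefined) \<in> summaries v j"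
    using assms unfolding summaries_def by (auto simp: extensional_def)
  then show ?thesis by blast
qed

lemma interp_facts:
  assumes "is_distr (reports v) p" "(\<Sum>a\<in>cyl v y. p a) > 0"
  shows "\<And>x. interp v p y x \<ge> 0" "(\<Sum>x\<in>reports v. interp v p y x) = 1"
proof -
  have cs: "cyl v y \<subseteq> reports v" unfolding cyl_def by auto
  show "\<And>x. interp v p y x \<ge> 0"
    using assms cs unfolding interp_def is_distr_def by auto
  have "(\<Sum>x\<in>reports v. interp v p y x) = (\<Sum>x\<in>cyl v y. p x / (\<Sum>a\<in>cyl v y. p a))"
    unfolding interp_def
    by (rule sum.mono_neutral_cong_right[OF finite_reports cs]) auto
  also have "\<dots> = 1" using assms(2) by (simp add: sum_divide_distrib[symmetric])
  finally show "(\<Sum>x\<in>reports v. interp v p y x) = 1" .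
qed

lemma tv_min:
  fixes i :: "nat set \<Rightarrow> real" and A W :: "nat set set"
  assumes fA: "finite A" and WA: "W \<subseteq> A" and Wne: "W \<noteq> {}"
    and ipos: "\<And>x. i x \<ge> 0" and isum: "(\<Sum>x\<in>A. i x) = 1" and c: "c \<ge> 0"
    and x0A: "x0 \<in> A"
    and Q: "Q = {c * (\<Sum>x'\<in>A. \<bar>q x0 x' - i x'\<bar> / 2) | q. \<forall>x0\<in>A. ((\<forall>a\<in>A. q x0 a \<ge> 0) \<and> (\<Sum>a\<in>A. q x0 a) = 1) \<and> (\<forall>x\<in>A - W. q x0 x = 0)}"
  shows "Inf Q = c * (1 - (\<Sum>x\<in>W. i x))"
proof (rule cInf_eq_minimum)
  have fW: "finite W" using fA WA finite_subset by blast
  have split: "\<And>f. (\<Sum>x\<in>A. f x) = (\<Sum>x\<in>W. f x) + (\<Sum>x\<in>A - W. f x)"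
    using fA WA by (metis add.commute sum.subset_diff)
  have iW: "(\<Sum>x\<in>W. i x) \<le> 1"
    using split[of i] isum ipos by (metis le_add_same_cancel1 sum_nonneg)
  have iAW: "(\<Sum>x\<in>A - W. i x) = 1 - (\<Sum>x\<in>W. i x)" using split[of i] isum by simp
  obtain w0 where w0: "w0 \<in> W" using Wne by blast
  define r where "r = 1 - (\<Sum>x\<in>W. i x)"
  have r0: "r \<ge> 0" using iW r_def by simp
  define q0 where "q0 = (\<lambda>(_::nat set) x'. if x' \<in> W then i x' + (if x' = w0 then r else 0) else (0::real))"
  have q0W: "(\<Sum>x\<in>W. q0 x0 x) = (\<Sum>x\<in>W. i x) + r"
  proof -
    have "(\<Sum>x\<in>W. q0 x0 x) = (\<Sum>x\<in>W. i x + (if x = w0 then r else 0))"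
      unfolding q0_def by (rule sum.cong) auto
    also have "\<dots> = (\<Sum>x\<in>W. i x) + r" using fW w0 by (simp add: sum.distrib)
    finally show ?thesis .
  qed
  have q0sum: "(\<Sum>a\<in>A. q0 z a) = 1" for z
  proof -
    have "(\<Sum>a\<in>A - W. q0 z a) = 0" unfolding q0_def by simp
    moreover have "(\<Sum>a\<in>W. q0 z a) = (\<Sum>a\<in>W. q0 x0 a)" unfolding q0_def by simp
    ultimately show ?thesis using split[of "q0 z"] q0W r_def by simp
  qed
  have "(\<Sum>x'\<in>A. \<bar>q0 x0 x' - i x'\<bar>) = (\<Sum>x'\<in>W. \<bar>q0 x0 x' - i x'\<bar>) + (\<Sum>x'\<in>A-W. \<bar>q0 x0 x' - i x'\<bar>)"
    by (rule split)
  also have "(\<Sum>x'\<in>W. \<bar>q0 x0 x' - i x'\<bar>) = (\<Sum>x'\<in>W. if x' = w0 then r else 0)"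
    unfolding q0_def using r0 by (intro sum.cong) auto
  also have "\<dots> = r" using fW w0 by simp
  also have "(\<Sum>x'\<in>A-W. \<bar>q0 x0 x' - i x'\<bar>) = (\<Sum>x'\<in>A-W. i x')"
    unfolding q0_def using ipos by (intro sum.cong) auto
  finally have tv0: "(\<Sum>x'\<in>A. \<bar>q0 x0 x' - i x'\<bar>) = 2 * r" using iAW r_def by simp
  have "c * (\<Sum>x'\<in>A. \<bar>q0 x0 x' - i x'\<bar> / 2) = c * r"
    using tv0 by (simp add: sum_divide_distrib[symmetric])
  moreover have "\<forall>x0\<in>A. ((\<forall>a\<in>A. q0 x0 a \<ge> 0) \<and> (\<Sum>a\<in>A. q0 x0 a) = 1) \<and> (\<forall>x\<in>A - W. q0 x0 x = 0)"
    using q0sum ipos r0 unfolding q0_def by auto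
  ultimately show "c * (1 - (\<Sum>x\<in>W. i x)) \<in> Q" unfolding Q r_def
    by (intro CollectI exI[of _ q0] conjI) (simp_all, metis)
  fix z assume "z \<in> Q"
  then obtain q where z: "z = c * (\<Sum>x'\<in>A. \<bar>q x0 x' - i x'\<bar> / 2)"
    and qd: "\<forall>x0\<in>A. ((\<forall>a\<in>A. q x0 a \<ge> 0) \<and> (\<Sum>a\<in>A. q x0 a) = 1) \<and> (\<forall>x\<in>A - W. q x0 x = 0)"
    unfolding Q by blast
  have qAW: "(\<Sum>a\<in>A-W. q x0 a) = 0" using qd x0A by simp
  have qW: "(\<Sum>a\<in>W. q x0 a) = 1" using split[of "q x0"] qAW qd x0A by simp
  have e1: "(\<Sum>x'\<in>A. \<bar>q x0 x' - i x'\<bar>) = (\<Sum>x'\<in>W. \<bar>q x0 x' - i x'\<bar>) + (\<Sum>x'\<in>A-W. \<bar>q x0 x' - i x'\<bar>)"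
    by (rule split)
  have e2: "(\<Sum>x'\<in>A-W. \<bar>q x0 x' - i x'\<bar>) = (\<Sum>x'\<in>A-W. i x')"
    using qd x0A ipos by (intro sum.cong) auto
  have e3: "(\<Sum>x'\<in>W. \<bar>q x0 x' - i x'\<bar>) \<ge> \<bar>\<Sum>x'\<in>W. q x0 x' - i x'\<bar>"
    by (rule sum_abs)
  have e4: "(\<Sum>x'\<in>W. q x0 x' - i x') = 1 - (\<Sum>x\<in>W. i x)"
    using qW by (simp add: sum_subtractf)
  have "(\<Sum>x'\<in>A. \<bar>q x0 x' - i x'\<bar>) \<ge> 2 * (1 - (\<Sum>x\<in>W. i x))"
    using e1 e2 e3 e4 iAW iW by simp
  then have "(\<Sum>x'\<in>A. \<bar>q x0 x' - i x'\<bar> / 2) \<ge> 1 - (\<Sum>x\<in>W. i x)"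
    by (simp add: sum_divide_distrib[symmetric])
  then show "c * (1 - (\<Sum>x\<in>W. i x)) \<le> z" unfolding z using c by (rule mult_left_mono)
qed

lemma sem_term_eq:
  assumes "is_distr (reports v) p" "(\<Sum>a\<in>cyl v y. p a) > 0" "sem_weights v u"
    and x: "x \<in> reports v"
  shows "sem_term v p u x y = (\<Sum>W\<in>Pow (reports v). u x W * (1 - interp_set v p y W))"
proof -
  note ii = interp_facts[OF assms(1,2)]
  have "sem_term v p u x y = (\<Sum>W\<in>Pow (reports v) - {{}}. u x W * (1 - interp_set v p y W))"
    unfolding sem_term_def
  proof (rule sum.cong[OF refl])
    fix W assume W: "W \<in> Pow (reports v) - {{}}"
    have c: "u x W \<ge> 0" using assms(3) x W unfolding sem_weights_def by auto
    show "Inf {u x W * (\<Sum>x'\<in>reports v. \<bar>q x x' - interp v p y x'\<bar> / 2) | q. q \<in> cond_distrs v W}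
      = u x W * (1 - interp_set v p y W)"
      unfolding interp_set_def
      apply (rule tv_min[OF finite_reports _ _ ii(1) ii(2) c x])
      using W apply auto[2]
      unfolding cond_distrs_def is_distr_def by simp
  qed
  also have "\<dots> = (\<Sum>W\<in>Pow (reports v). u x W * (1 - interp_set v p y W))"
  proof -
    have "u x {} = 0" using assms(3) x unfolding sem_weights_def by auto
    then show ?thesis
      using sum.remove[of "Pow (reports v)" "{}" "\<lambda>W. u x W * (1 - interp_set v p y W)"] finite_reports
      by (simp add: Diff_eq)
  qed
  finally show ?thesis .
qed

theorem corollary1:
  fixes v j n :: nat and p :: "nat set \<Rightarrow> real" and u :: "nat set \<Rightarrow> nat set set \<Rightarrow> real"
  assumes "0 < v" "0 < j" "0 < n" "j \<le> v"
    and "is_distr (reports v) p"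
    and "\<forall>y\<in>summaries v j. (\<Sum>a\<in>cyl v y. p a) > 0"
    and "sem_weights v u"
  shows "(\<exists>s\<in>summarizers v j n. sem_loss v j n p u s =
            (\<Sum>x\<in>reports v. p x * Min ((\<lambda>y. \<Sum>W\<in>Pow (reports v). u x W * (1 - interp_set v p y W)) ` summaries v j)))
       \<and> (\<forall>s\<in>summarizers v j n. sem_loss v j n p u s \<ge>
            (\<Sum>x\<in>reports v. p x * Min ((\<lambda>y. \<Sum>W\<in>Pow (reports v). u x W * (1 - interp_set v p y W)) ` summaries v j)))"
proof -
  define F where "F = (\<lambda>x y. \<Sum>W\<in>Pow (reports v). u x W * (1 - interp_set v p y W))"
  define M where "M = (\<lambda>x. Min (F x ` summaries v j))"
  define P where "P = (\<lambda>xs. \<Prod>i<n. p (xs ! i))"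
  let ?Y = "summaries v j"
  have fY: "finite ?Y" by (rule finite_summaries)
  have neY: "?Y \<noteq> {}" using summaries_ne assms(4) by blast
  have psum: "(\<Sum>x\<in>reports v. p x) = 1" using assms(5) unfolding is_distr_def by simp
  have pnn: "\<And>x. x \<in> reports v \<Longrightarrow> p x \<ge> 0" using assms(5) unfolding is_distr_def by simp
  have x0: "xs ! 0 \<in> reports v" if "xs \<in> report_seqs v n" for xs
    using that assms(3) unfolding report_seqs_def by (cases xs) auto
  have Pnn: "P xs \<ge> 0" if "xs \<in> report_seqs v n" for xs
    unfolding P_def using that pnn unfolding report_seqs_def
    by (intro prod_nonneg) (auto simp: subset_iff)
  have st: "sem_term v p u (xs ! 0) y = F (xs ! 0) y" if "xs \<in> report_seqs v n" "y \<in> ?Y" for xs y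
    unfolding F_def using sem_term_eq[OF assms(5) _ assms(7) x0[OF that(1)]] assms(6) that(2) by blast
  have loss: "sem_loss v j n p u s = (\<Sum>xs\<in>report_seqs v n. P xs * (\<Sum>y\<in>?Y. s xs y * F (xs ! 0) y))" for s
    unfolding sem_loss_def P_def using st by (intro sum.cong refl) auto
  have target: "(\<Sum>xs\<in>report_seqs v n. P xs * M (xs ! 0)) = (\<Sum>x\<in>reports v. p x * M x)"
    unfolding P_def by (rule sum_seqs_first[OF psum assms(3)])
  define ym where "ym = (\<lambda>x. SOME y. y \<in> ?Y \<and> F x y = M x)"
  have ym: "ym x \<in> ?Y \<and> F x (ym x) = M x" for x
  proof -
    have "M x \<in> F x ` ?Y" unfolding M_def using fY neY by (intro Min_in) auto
    then have "\<exists>y. y \<in> ?Y \<and> F x y = M x" by (metis imageE)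
    then show ?thesis unfolding ym_def by (rule someI_ex)
  qed
  define s0 where "s0 = (\<lambda>xs y. if y = ym (xs ! 0) then 1 else (0::real))"
  have s0sum: "(\<Sum>y\<in>?Y. s0 xs y * g y) = g (ym (xs ! 0))" for xs g
  proof -
    have "(\<Sum>y\<in>?Y. s0 xs y * g y) = (\<Sum>y\<in>?Y. if y = ym (xs ! 0) then g y else 0)"
      unfolding s0_def by (intro sum.cong) auto
    also have "\<dots> = g (ym (xs ! 0))" using fY ym by simp
    finally show ?thesis .
  qed
  have s0in: "s0 \<in> summarizers v j n"
    unfolding summarizers_def is_distr_def
    using s0sum[where g="\<lambda>_. 1"] by (auto simp: s0_def)
  have "sem_loss v j n p u s0 = (\<Sum>x\<in>reports v. p x * M x)"
    unfolding loss s0sum using ym target by simp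
  moreover have "sem_loss v j n p u s \<ge> (\<Sum>x\<in>reports v. p x * M x)" if s: "s \<in> summarizers v j n" for s
  proof -
    have "(\<Sum>xs\<in>report_seqs v n. P xs * M (xs ! 0)) \<le> (\<Sum>xs\<in>report_seqs v n. P xs * (\<Sum>y\<in>?Y. s xs y * F (xs ! 0) y))"
    proof (rule sum_mono)
      fix xs assume xs: "xs \<in> report_seqs v n"
      have sd: "(\<forall>y\<in>?Y. s xs y \<ge> 0) \<and> (\<Sum>y\<in>?Y. s xs y) = 1"
        using s xs unfolding summarizers_def is_distr_def by auto
      have "M (xs ! 0) = (\<Sum>y\<in>?Y. s xs y * M (xs ! 0))"
        using sd by (simp add: sum_distrib_right[symmetric])
      also have "\<dots> \<le> (\<Sum>y\<in>?Y. s xs y * F (xs ! 0) y)"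
        using sd fY unfolding M_def by (intro sum_mono mult_left_mono Min_le) auto
      finally show "P xs * M (xs ! 0) \<le> P xs * (\<Sum>y\<in>?Y. s xs y * F (xs ! 0) y)"
        using Pnn[OF xs] by (rule mult_left_mono)
    qed
    then show ?thesis unfolding loss target .
  qed
  ultimately show ?thesis using s0in unfolding M_def F_def by blast
qed

end
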